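(* Let $Y:=\frac12\sum_{i=1}^N\sum_{k=1}^n[X_{(i,k,1)},X_{(i,k,2)}]$, a continuous vector field on $\mathbb{R}^{nN}$. There exist $c,r>0$ such that $(Y\psi)(p)\leq -c\,\|\nabla\psi(p)\|^4$ for every $p\in\mathbb{R}^{nN}$ with $\psi(p)\leq r$.
   Context: $G=(V,E)$ is an undirected graph with $V=\{1,\ldots,N\}$ and nonempty edge set $E$ of two-element subsets (edges $ij$); $d_{ij}\geq0$ for $ij\in E$. For $p=(p_1,\ldots,p_N)\in\mathbb{R}^{nN}$: $\psi_i(p)=\frac14\sum_{j:\,ij\in E}(\|p_j-p_i\|^2-d_{ij}^2)^2$ and $\psi(p)=\frac14\sum_{ij\in E}(\|p_j-p_i\|^2-d_{ij}^2)^2$. For each $i$, $b_{i,1},\ldots,b_{i,n}$ is an orthonormal basis of $\mathbb{R}^n$; $B_{i,k}$ is the constant vector field on $\mathbb{R}^{nN}$ with $i$-th block $b_{i,k}$ and other blocks $0$. $X_{(i,k,\nu)}(p):=h_\nu(\psi_i(p))B_{i,k}(p)$; these vector fields are of class $C^1$, and $[X,Z](p)=\mathrm{D}Z(p)X(p)-\mathrm{D}X(p)Z(p)$ is the Lie bracket; $Y\psi(p)=\mathrm{D}\psi(p)Y(p)$. The functions $h_1,h_2:\mathbb{R}\to\mathbb{R}$ satisfy, for $\nu=1,2$: (i) $h_\nu(y)=0$ for $y\leq 0$; (ii) $h_\nu$ is bounded and of class $C^2$ on $(0,\infty)$; (iii) $h_\nu(y)/y$ remains bounded as $y\downarrow 0$;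 (iv) $h_\nu'(y)$ remains bounded as $y\downarrow0$; (v) $h_\nu''(y)\,y$ remains bounded as $y\downarrow 0$; (vi) there exist $r',c'>0$ with $h_2'(y)h_1(y)-h_1'(y)h_2(y)\leq -c'y$ for all $y\in(0,r']$. *)

theory Defs
  imports "HOL-Analysis.Analysis"
begin

text \<open>Configurations p in R^(nN) are represented as elements of real^'n^'v:
  'v is the (finite) vertex type, 'n the coordinate index type of R^n.
  The norm on real^'n^'v is the Euclidean norm of R^(nN).\<close>

definition edge_term :: "('v set \<Rightarrow> real) \<Rightarrow> real^'n^'v \<Rightarrow> 'v set \<Rightarrow> real" where
  "edge_term d p e =
     (let ij = (SOME ij. e = {fst ij, snd ij} \<and> fst ij \<noteq> snd ij)
      in (norm (p $ snd ij - p $ fst ij) ^ 2 - d e ^ 2) ^ 2)"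

definition psi :: "'v set set \<Rightarrow> ('v set \<Rightarrow> real) \<Rightarrow> real^'n^'v \<Rightarrow> real" where
  "psi E d p = (1/4) * (\<Sum>e\<in>E. edge_term d p e)"

definition psi_i :: "'v set set \<Rightarrow> ('v set \<Rightarrow> real) \<Rightarrow> 'v \<Rightarrow> real^'n^'v \<Rightarrow> real" where
  "psi_i E d i p = (1/4) * (\<Sum>j\<in>{j. {i, j} \<in> E}. (norm (p $ j - p $ i) ^ 2 - d {i, j} ^ 2) ^ 2)"

definition Bfield :: "('v \<Rightarrow> 'n \<Rightarrow> real^'n) \<Rightarrow> 'v \<Rightarrow> 'n \<Rightarrow> real^'n^'v" where
  "Bfield b i k = (\<chi> j. if j = i then b i k else 0)"

definition Xfield :: "'v set set \<Rightarrow> ('v set \<Rightarrow> real) \<Rightarrow> ('v \<Rightarrow> 'n \<Rightarrow> real^'n)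
    \<Rightarrow> (real \<Rightarrow> real) \<Rightarrow> 'v \<Rightarrow> 'n \<Rightarrow> real^'n^'v \<Rightarrow> real^'n^'v" where
  "Xfield E d b h i k p = h (psi_i E d i p) *\<^sub>R Bfield b i k"

definition lie_bracket :: "('a::real_normed_vector \<Rightarrow> 'a) \<Rightarrow> ('a \<Rightarrow> 'a) \<Rightarrow> 'a \<Rightarrow> 'a" where
  "lie_bracket X Z p = frechet_derivative Z (at p) (X p) - frechet_derivative X (at p) (Z p)"

definition Yfield :: "'v::finite set set \<Rightarrow> ('v set \<Rightarrow> real) \<Rightarrow> ('v \<Rightarrow> 'n::finite \<Rightarrow> real^'n)
    \<Rightarrow> (real \<Rightarrow> real) \<Rightarrow> (real \<Rightarrow> real) \<Rightarrow> real^'n^'v \<Rightarrow> real^'n^'v" where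
  "Yfield E d b h1 h2 p =
     (1/2) *\<^sub>R (\<Sum>i\<in>UNIV. \<Sum>k\<in>UNIV. lie_bracket (Xfield E d b h1 i k) (Xfield E d b h2 i k) p)"

definition lie_deriv :: "('a::real_normed_vector \<Rightarrow> 'a) \<Rightarrow> ('a \<Rightarrow> real) \<Rightarrow> 'a \<Rightarrow> real" where
  "lie_deriv Y f p = frechet_derivative f (at p) (Y p)"

definition grad :: "('a::real_inner \<Rightarrow> real) \<Rightarrow> 'a \<Rightarrow> 'a" where
  "grad f p = (SOME g. (f has_derivative (\<lambda>v. g \<bullet> v)) (at p))"

end

theory Submission
  imports Defs
begin

lemma deriv_sqterm:
  fixes p :: "real^'n^'v"
  shows "((\<lambda>q. (norm (q$j - q$i)^2 - c)^2) has_derivative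
     (\<lambda>v. 4 * (norm (p$j - p$i)^2 - c) * ((p$j - p$i) \<bullet> (v$j - v$i)))) (at p)"
proof -
  have lin: "bounded_linear (\<lambda>q::real^'n^'v. q$j - q$i)"
    by (intro bounded_linear_sub bounded_linear_vec_nth)
  have 1: "((\<lambda>q::real^'n^'v. q$j - q$i) has_derivative (\<lambda>v. v$j - v$i)) (at p)"
    using lin by (rule bounded_linear_imp_has_derivative)
  have 2: "((\<lambda>q. (q$j - q$i) \<bullet> (q$j - q$i)) has_derivative
      (\<lambda>v. (p$j - p$i) \<bullet> (v$j - v$i) + (v$j - v$i) \<bullet> (p$j - p$i))) (at p)"
    by (rule has_derivative_inner[OF 1 1])
  have 3: "((\<lambda>q. (q$j - q$i) \<bullet> (q$j - q$i) - c) has_derivative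
      (\<lambda>v. (p$j - p$i) \<bullet> (v$j - v$i) + (v$j - v$i) \<bullet> (p$j - p$i))) (at p)"
    using has_derivative_diff[OF 2 has_derivative_const[of c]] by simp
  note 4 = has_derivative_mult[OF 3 3]
  have e1: "(\<lambda>q::real^'n^'v. (norm (q$j - q$i)^2 - c)^2) =
     (\<lambda>q. ((q$j - q$i) \<bullet> (q$j - q$i) - c) * ((q$j - q$i) \<bullet> (q$j - q$i) - c))"
    by (rule ext) (simp add: power2_norm_eq_inner[symmetric] power2_eq_square)
  have e2: "(\<lambda>v::real^'n^'v. 4 * (norm (p$j - p$i)^2 - c) * ((p$j - p$i) \<bullet> (v$j - v$i))) =
     (\<lambda>v. ((p$j - p$i) \<bullet> (p$j - p$i) - c) * ((p$j - p$i) \<bullet> (v$j - v$i) + (v$j - v$i) \<bullet> (p$j - p$i))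
        + ((p$j - p$i) \<bullet> (v$j - v$i) + (v$j - v$i) \<bullet> (p$j - p$i)) * ((p$j - p$i) \<bullet> (p$j - p$i) - c))"
    by (rule ext) (simp add: power2_norm_eq_inner inner_commute algebra_simps)
  show ?thesis unfolding e1 e2 by (rule 4)
qed

lemma riesz:
  fixes D :: "'a::euclidean_space \<Rightarrow> real"
  assumes "linear D"
  shows "\<exists>g. \<forall>v. D v = g \<bullet> v"
proof
  show "\<forall>v. D v = (\<Sum>x\<in>Basis. D x *\<^sub>R x) \<bullet> v"
  proof
    fix v
    have "D v = D (\<Sum>x\<in>Basis. (v \<bullet> x) *\<^sub>R x)" by (simp add: euclidean_representation)
    also have "\<dots> = (\<Sum>x\<in>Basis. (v \<bullet> x) * D x)"
      using assms by (simp add: linear_sum linear_scale)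
    also have "\<dots> = (\<Sum>x\<in>Basis. D x *\<^sub>R x) \<bullet> v"
      by (simp add: inner_sum_right inner_commute mult.commute)
    finally show "D v = (\<Sum>x\<in>Basis. D x *\<^sub>R x) \<bullet> v" .
  qed
qed

lemma parseval:
  fixes b :: "'n::finite \<Rightarrow> real^'n"
  assumes "\<forall>k l. b k \<bullet> b l = (if k = l then 1 else 0)"
  shows "(\<Sum>k\<in>UNIV. (w \<bullet> b k)^2) = norm w ^ 2"
proof -
  define M :: "real^'n^'n" where "M = (\<chi> k. b k)"
  have om: "orthogonal_matrix M"
    unfolding orthogonal_matrix_orthonormal_rows
  proof (intro conjI allI impI)
    fix i show "norm (row i M) = 1"
      using assms by (simp add: M_def row_def norm_eq_sqrt_inner)
  next
    fix i j :: 'n assume "i \<noteq> j" then show "orthogonal (row i M) (row j M)"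
      using assms by (simp add: M_def row_def orthogonal_def)
  qed
  have ot: "orthogonal_transformation ((*v) M)"
    using om by (simp add: orthogonal_transformation_matrix)
  have "norm w ^ 2 = norm (M *v w) ^ 2" using orthogonal_transformation_norm[OF ot] by simp
  also have "\<dots> = (\<Sum>k\<in>UNIV. ((M *v w) $ k)^2)"
    by (simp add: norm_vec_def L2_set_def sum_nonneg)
  also have "\<dots> = (\<Sum>k\<in>UNIV. (w \<bullet> b k)^2)"
    by (simp add: M_def matrix_vector_mult_def inner_vec_def mult.commute)
  finally show ?thesis by simp
qed

lemma comp_zero_deriv:
  fixes g :: "'a::real_normed_vector \<Rightarrow> real"
  assumes gd: "(g has_derivative (\<lambda>v. 0)) (at p)" and gp: "g p = 0"
    and hz: "\<forall>y\<le>0. h y = 0" and hb: "\<forall>\<^sub>F y in at_right 0. \<bar>h y / y\<bar> \<le> M"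
  shows "((\<lambda>q. h (g q)) has_derivative (\<lambda>v. 0)) (at p)"
proof -
  have h0: "h 0 = 0" using hz by simp
  obtain \<delta> where dpos: "\<delta> > 0" and dh: "\<forall>y. 0 < y \<and> y < \<delta> \<longrightarrow> \<bar>h y / y\<bar> \<le> M"
    using hb unfolding eventually_at_right_field by auto
  have hle: "\<bar>h y\<bar> \<le> \<bar>M\<bar> * \<bar>y\<bar>" if "y < \<delta>" for y
  proof (cases "y \<le> 0")
    case True then have "h y = 0" using hz by simp
    then show ?thesis by simp
  next
    case False
    then have "\<bar>h y / y\<bar> \<le> M" using dh that by auto
    then have "\<bar>h y\<bar> / \<bar>y\<bar> \<le> \<bar>M\<bar>" by (simp add: abs_divide)
    then show ?thesis using False by (simp add: divide_le_eq mult.commute)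
  qed
  have gt: "((\<lambda>y. norm (g y - g p - 0) / norm (y - p)) \<longlongrightarrow> 0) (at p)"
    using gd unfolding has_derivative_iff_norm by simp
  have gc: "(g \<longlongrightarrow> g p) (at p)"
    using has_derivative_continuous[OF gd] by (simp add: isCont_def)
  then have ev: "\<forall>\<^sub>F y in at p. g y < \<delta>"
    using gp dpos by (simp add: order_tendstoD(2))
  have "((\<lambda>y. norm (h (g y) - h (g p) - 0) / norm (y - p)) \<longlongrightarrow> 0) (at p)"
  proof (rule Lim_null_comparison)
    show "\<forall>\<^sub>F y in at p. norm (norm (h (g y) - h (g p) - 0) / norm (y - p))
            \<le> \<bar>M\<bar> * (norm (g y - g p - 0) / norm (y - p))"
      using ev
    proof eventually_elim
      case (elim y)
      have "\<bar>h (g y)\<bar> / norm (y - p) \<le> (\<bar>M\<bar> * \<bar>g y\<bar>) / norm (y - p)"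
        using hle[OF elim] by (simp add: divide_right_mono)
      then show ?case using gp h0 by simp
    qed
    show "((\<lambda>y. \<bar>M\<bar> * (norm (g y - g p - 0) / norm (y - p))) \<longlongrightarrow> 0) (at p)"
      using tendsto_mult_right_zero[OF gt] by simp
  qed
  then show ?thesis unfolding has_derivative_iff_norm by simp
qed

definition ep :: "'v set \<Rightarrow> 'v \<times> 'v" where
  "ep e = (SOME ij. e = {fst ij, snd ij} \<and> fst ij \<noteq> snd ij)"

lemma ep_prop: "card e = 2 \<Longrightarrow> e = {fst (ep e), snd (ep e)} \<and> fst (ep e) \<noteq> snd (ep e)"
proof -
  assume "card e = 2"
  then obtain x y where "e = {x, y}" "x \<noteq> y" by (auto simp: card_2_iff)
  then have "\<exists>ij. e = {fst ij, snd ij} \<and> fst ij \<noteq> snd ij" by (intro exI[of _ "(x,y)"]) simp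
  then show ?thesis unfolding ep_def by (rule someI_ex)
qed

lemma edge_term_ep: "edge_term d p e = (norm (p $ snd (ep e) - p $ fst (ep e))^2 - d e^2)^2"
  by (simp add: edge_term_def ep_def Let_def)

lemma reindex:
  fixes F :: "'v \<Rightarrow> 'v \<Rightarrow> real" and E :: "'v set set"
  assumes card: "\<forall>e\<in>E. card e = 2" and sym: "\<forall>a b. F a b = F b a"
  shows "(\<Sum>e\<in>{e\<in>E. i\<in>e}. F (fst (ep e)) (snd (ep e))) = (\<Sum>j\<in>{j. {i,j}\<in>E}. F i j)"
proof -
  have neq: "i \<noteq> j" if "{i,j} \<in> E" for j
    using card that by fastforce
  have bij: "bij_betw (\<lambda>j. {i,j}) {j. {i,j}\<in>E} {e\<in>E. i\<in>e}"
    unfolding bij_betw_def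
  proof
    show "inj_on (\<lambda>j. {i,j}) {j. {i,j}\<in>E}"
      unfolding inj_on_def using neq by (auto simp: doubleton_eq_iff)
    show "(\<lambda>j. {i,j}) ` {j. {i,j}\<in>E} = {e\<in>E. i\<in>e}"
    proof
      show "(\<lambda>j. {i,j}) ` {j. {i,j}\<in>E} \<subseteq> {e\<in>E. i\<in>e}" by auto
      show "{e\<in>E. i\<in>e} \<subseteq> (\<lambda>j. {i,j}) ` {j. {i,j}\<in>E}"
      proof
        fix e assume e: "e \<in> {e\<in>E. i\<in>e}"
        then obtain x y where xy: "e = {x,y}" "x \<noteq> y" using card by (auto simp: card_2_iff)
        show "e \<in> (\<lambda>j. {i,j}) ` {j. {i,j}\<in>E}"
        proof (cases "x = i")
          case True then show ?thesis using e xy by (intro image_eqI[of _ _ y]) auto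
        next
          case False then have "y = i" using e xy by auto
          then show ?thesis using e xy by (intro image_eqI[of _ _ x]) (auto simp: insert_commute)
        qed
      qed
    qed
  qed
  have "(\<Sum>j\<in>{j. {i,j}\<in>E}. F (fst (ep {i,j})) (snd (ep {i,j}))) = (\<Sum>e\<in>{e\<in>E. i\<in>e}. F (fst (ep e)) (snd (ep e)))"
    by (rule sum.reindex_bij_betw[OF bij])
  moreover have "(\<Sum>j\<in>{j. {i,j}\<in>E}. F (fst (ep {i,j})) (snd (ep {i,j}))) = (\<Sum>j\<in>{j. {i,j}\<in>E}. F i j)"
  proof (rule sum.cong)
    fix j assume "j \<in> {j. {i,j}\<in>E}"
    then have "card {i,j} = 2" using card by auto
    then have "{i,j} = {fst (ep {i,j}), snd (ep {i,j})}" by (rule ep_prop[THEN conjunct1])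
    then have "(fst (ep {i,j}) = i \<and> snd (ep {i,j}) = j) \<or> (fst (ep {i,j}) = j \<and> snd (ep {i,j}) = i)"
      by (auto simp: doubleton_eq_iff)
    then show "F (fst (ep {i,j})) (snd (ep {i,j})) = F i j" using sym by auto
  qed simp
  ultimately show ?thesis by simp
qed

definition Dpi :: "'v set set \<Rightarrow> ('v set \<Rightarrow> real) \<Rightarrow> 'v \<Rightarrow> real^'n^'v \<Rightarrow> real^'n^'v \<Rightarrow> real" where
  "Dpi E d i p v = (\<Sum>j\<in>{j. {i,j}\<in>E}. (norm (p$j - p$i)^2 - d {i,j}^2) * ((p$j - p$i) \<bullet> (v$j - v$i)))"

definition Dps :: "'v set set \<Rightarrow> ('v set \<Rightarrow> real) \<Rightarrow> real^'n^'v \<Rightarrow> real^'n^'v \<Rightarrow> real" where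
  "Dps E d p v = (\<Sum>e\<in>E. (norm (p $ snd (ep e) - p $ fst (ep e))^2 - d e^2) *
      ((p $ snd (ep e) - p $ fst (ep e)) \<bullet> (v $ snd (ep e) - v $ fst (ep e))))"

lemma psi_i_deriv: "(psi_i E d i has_derivative Dpi E d i p) (at p)"
proof -
  have "((\<lambda>q. \<Sum>j\<in>{j. {i,j}\<in>E}. (norm (q$j - q$i)^2 - d {i,j}^2)^2) has_derivative
     (\<lambda>v. \<Sum>j\<in>{j. {i,j}\<in>E}. 4 * (norm (p$j - p$i)^2 - d {i,j}^2) * ((p$j - p$i) \<bullet> (v$j - v$i)))) (at p)"
    by (rule has_derivative_sum) (rule deriv_sqterm)
  note 1 = has_derivative_mult_right[OF this, of "1/4"]
  have e1: "psi_i E d i = (\<lambda>q. 1/4 * (\<Sum>j\<in>{j. {i,j}\<in>E}. (norm (q$j - q$i)^2 - d {i,j}^2)^2))"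
    by (rule ext) (simp add: psi_i_def)
  have e2: "Dpi E d i p = (\<lambda>v. 1/4 * (\<Sum>j\<in>{j. {i,j}\<in>E}. 4 * (norm (p$j - p$i)^2 - d {i,j}^2) * ((p$j - p$i) \<bullet> (v$j - v$i))))"
    by (rule ext) (unfold Dpi_def sum_distrib_left, rule sum.cong, simp_all)
  show ?thesis unfolding e1 e2 by (rule 1)
qed

lemma psi_deriv: "(psi E d has_derivative Dps E d p) (at p)"
proof -
  have "((\<lambda>q. \<Sum>e\<in>E. (norm (q $ snd (ep e) - q $ fst (ep e))^2 - d e^2)^2) has_derivative
     (\<lambda>v. \<Sum>e\<in>E. 4 * (norm (p $ snd (ep e) - p $ fst (ep e))^2 - d e^2) *
      ((p $ snd (ep e) - p $ fst (ep e)) \<bullet> (v $ snd (ep e) - v $ fst (ep e))))) (at p)"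
    by (rule has_derivative_sum) (rule deriv_sqterm)
  note 1 = has_derivative_mult_right[OF this, of "1/4"]
  have e1: "psi E d = (\<lambda>q. 1/4 * (\<Sum>e\<in>E. (norm (q $ snd (ep e) - q $ fst (ep e))^2 - d e^2)^2))"
    by (rule ext) (simp add: psi_def edge_term_ep)
  have e2: "Dps E d p = (\<lambda>v. 1/4 * (\<Sum>e\<in>E. 4 * (norm (p $ snd (ep e) - p $ fst (ep e))^2 - d e^2) *
      ((p $ snd (ep e) - p $ fst (ep e)) \<bullet> (v $ snd (ep e) - v $ fst (ep e)))))"
    by (rule ext) (unfold Dps_def sum_distrib_left, rule sum.cong, simp_all)
  show ?thesis unfolding e1 e2 by (rule 1)
qed

lemma sum_edges_split:
  fixes E :: "'v::finite set set" and F :: "'v \<Rightarrow> 'v \<Rightarrow> real"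
  assumes card: "\<forall>e\<in>E. card e = 2" and sym: "\<forall>a b. F a b = F b a"
  shows "(\<Sum>e\<in>E. F (fst (ep e)) (snd (ep e))) =
     (\<Sum>j\<in>{j. {i,j}\<in>E}. F i j) + (\<Sum>e\<in>{e\<in>E. i \<notin> e}. F (fst (ep e)) (snd (ep e)))"
proof -
  have fin: "finite E" by simp
  have "(\<Sum>e\<in>E. F (fst (ep e)) (snd (ep e))) =
     (\<Sum>e\<in>E \<inter> {e. i \<in> e}. F (fst (ep e)) (snd (ep e))) + (\<Sum>e\<in>E - {e. i \<in> e}. F (fst (ep e)) (snd (ep e)))"
    by (rule sum.Int_Diff[OF fin])
  also have "E \<inter> {e. i \<in> e} = {e\<in>E. i\<in>e}" by auto
  also have "E - {e. i \<in> e} = {e\<in>E. i\<notin>e}" by auto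
  finally show ?thesis using reindex[OF card sym] by simp
qed

lemma psi_i_le_psi:
  fixes E :: "'v::finite set set"
  assumes card: "\<forall>e\<in>E. card e = 2"
  shows "psi_i E d i p \<le> psi E d p"
proof -
  define F where "F a b = (norm (p$b - p$a)^2 - d {a,b}^2)^2" for a b
  have sym: "\<forall>a b. F a b = F b a" by (simp add: F_def norm_minus_commute insert_commute)
  have "psi E d p = 1/4 * (\<Sum>e\<in>E. F (fst (ep e)) (snd (ep e)))"
    unfolding psi_def
  proof (intro arg_cong[where f="\<lambda>x. 1/4 * x"] sum.cong refl)
    fix e assume "e \<in> E"
    then have "e = {fst (ep e), snd (ep e)}" using ep_prop card by blast
    then have "d e = d {fst (ep e), snd (ep e)}" by (rule arg_cong)
    then show "edge_term d p e = F (fst (ep e)) (snd (ep e))" by (simp add: edge_term_ep F_def)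
  qed
  also have "\<dots> = 1/4 * (\<Sum>j\<in>{j. {i,j}\<in>E}. F i j) + 1/4 * (\<Sum>e\<in>{e\<in>E. i \<notin> e}. F (fst (ep e)) (snd (ep e)))"
    using sum_edges_split[OF card sym] by simp
  also have "1/4 * (\<Sum>j\<in>{j. {i,j}\<in>E}. F i j) = psi_i E d i p" by (simp add: psi_i_def F_def)
  finally show ?thesis by (simp add: F_def sum_nonneg)
qed

lemma Dps_B:
  fixes E :: "'v::finite set set"
  assumes card: "\<forall>e\<in>E. card e = 2"
  shows "Dps E d p (Bfield b i k) = Dpi E d i p (Bfield b i k)"
proof -
  define v where "v = Bfield b i k"
  define T where "T a c = (norm (p$c - p$a)^2 - d {a,c}^2) * ((p$c - p$a) \<bullet> (v$c - v$a))" for a c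
  have sym: "\<forall>a c. T a c = T c a"
    by (simp add: T_def norm_minus_commute insert_commute inner_diff_left inner_diff_right algebra_simps)
  have "Dps E d p v = (\<Sum>e\<in>E. T (fst (ep e)) (snd (ep e)))"
    unfolding Dps_def
  proof (intro sum.cong refl)
    fix e assume "e \<in> E"
    then have "e = {fst (ep e), snd (ep e)}" using ep_prop card by blast
    then have "d e = d {fst (ep e), snd (ep e)}" by (rule arg_cong)
    then show "(norm (p $ snd (ep e) - p $ fst (ep e))^2 - d e^2) *
      ((p $ snd (ep e) - p $ fst (ep e)) \<bullet> (v $ snd (ep e) - v $ fst (ep e))) = T (fst (ep e)) (snd (ep e))"
      by (simp add: T_def)
  qed
  also have "\<dots> = (\<Sum>j\<in>{j. {i,j}\<in>E}. T i j) + (\<Sum>e\<in>{e\<in>E. i \<notin> e}. T (fst (ep e)) (snd (ep e)))"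
    by (rule sum_edges_split[OF card sym])
  also have "(\<Sum>e\<in>{e\<in>E. i \<notin> e}. T (fst (ep e)) (snd (ep e))) = 0"
  proof (rule sum.neutral, rule ballI)
    fix e assume e: "e \<in> {e\<in>E. i \<notin> e}"
    then have "e = {fst (ep e), snd (ep e)}" using ep_prop card by blast
    then have "fst (ep e) \<noteq> i" "snd (ep e) \<noteq> i" using e by auto
    then show "T (fst (ep e)) (snd (ep e)) = 0" by (simp add: T_def v_def Bfield_def)
  qed
  also have "(\<Sum>j\<in>{j. {i,j}\<in>E}. T i j) = Dpi E d i p v" by (simp add: T_def Dpi_def)
  finally show ?thesis by (simp add: v_def)
qed

lemma Dpi_B:
  fixes E :: "'v::finite set set"
  assumes card: "\<forall>e\<in>E. card e = 2"
  shows "Dpi E d i p (Bfield b i k) =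
     (\<Sum>j\<in>{j. {i,j}\<in>E}. (norm (p$j - p$i)^2 - d {i,j}^2) *\<^sub>R (p$i - p$j)) \<bullet> b i k"
  unfolding Dpi_def inner_sum_left
proof (rule sum.cong[OF refl])
  fix j assume "j \<in> {j. {i,j}\<in>E}"
  then have "j \<noteq> i" using card by fastforce
  then show "(norm (p$j - p$i)^2 - d {i,j}^2) * ((p$j - p$i) \<bullet> (Bfield b i k $ j - Bfield b i k $ i)) =
     ((norm (p$j - p$i)^2 - d {i,j}^2) *\<^sub>R (p$i - p$j)) \<bullet> b i k"
    by (simp add: Bfield_def inner_diff_left inner_diff_right)
qed

lemma psi_i_nonneg: "psi_i E d i p \<ge> 0"
  by (simp add: psi_i_def sum_nonneg)

lemma Dpi_zero:
  fixes E :: "'v::finite set set"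
  assumes "psi_i E d i p = 0"
  shows "Dpi E d i p = (\<lambda>v. 0)"
proof -
  have "(\<Sum>j\<in>{j. {i,j}\<in>E}. (norm (p$j - p$i)^2 - d {i,j}^2)^2) = 0"
    using assms by (simp add: psi_i_def)
  then have "\<forall>j\<in>{j. {i,j}\<in>E}. (norm (p$j - p$i)^2 - d {i,j}^2)^2 = 0"
    by (subst (asm) sum_nonneg_eq_0_iff) auto
  then show ?thesis by (intro ext) (simp add: Dpi_def)
qed

lemma h_comp_deriv:
  fixes E :: "'v::finite set set"
  assumes hz: "\<forall>y\<le>0. h y = 0" and hb: "\<exists>M. \<forall>\<^sub>F y in at_right 0. \<bar>h y / y\<bar> \<le> M"
    and hd: "\<forall>y>0. (h has_real_derivative h' y) (at y)"
  shows "((\<lambda>q. h (psi_i E d i q)) has_derivative (\<lambda>v. h' (psi_i E d i p) * Dpi E d i p v)) (at p)"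
proof (cases "psi_i E d i p > 0")
  case True
  then have "(h has_derivative (*) (h' (psi_i E d i p))) (at (psi_i E d i p))"
    using hd by (simp add: has_field_derivative_def)
  from has_derivative_compose[OF psi_i_deriv this] show ?thesis by simp
next
  case False
  then have z: "psi_i E d i p = 0" using psi_i_nonneg[of E d i p] by simp
  obtain M where M: "\<forall>\<^sub>F y in at_right 0. \<bar>h y / y\<bar> \<le> M" using hb by blast
  have "(psi_i E d i has_derivative (\<lambda>v. 0)) (at p)"
    using psi_i_deriv[of E d i p] Dpi_zero[OF z] by simp
  from comp_zero_deriv[OF this z hz M] show ?thesis using Dpi_zero[OF z] by simp
qed

lemma X_deriv:
  fixes E :: "'v::finite set set"
  assumes hz: "\<forall>y\<le>0. h y = 0" and hb: "\<exists>M. \<forall>\<^sub>F y in at_right 0. \<bar>h y / y\<bar> \<le> M"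
    and hd: "\<forall>y>0. (h has_real_derivative h' y) (at y)"
  shows "(Xfield E d b h i k has_derivative
     (\<lambda>v. (h' (psi_i E d i p) * Dpi E d i p v) *\<^sub>R Bfield b i k)) (at p)"
proof -
  have "((\<lambda>q. h (psi_i E d i q) *\<^sub>R Bfield b i k) has_derivative
     (\<lambda>v. (h' (psi_i E d i p) * Dpi E d i p v) *\<^sub>R Bfield b i k)) (at p)"
    by (rule has_derivative_scaleR_left[OF h_comp_deriv[OF hz hb hd]])
  then show ?thesis by (simp add: Xfield_def[abs_def])
qed

lemma bracket:
  fixes E :: "'v::finite set set"
  assumes h1z: "\<forall>y\<le>0. h1 y = 0" and h1b: "\<exists>M. \<forall>\<^sub>F y in at_right 0. \<bar>h1 y / y\<bar> \<le> M"
    and h1d: "\<forall>y>0. (h1 has_real_derivative h1' y) (at y)"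
    and h2z: "\<forall>y\<le>0. h2 y = 0" and h2b: "\<exists>M. \<forall>\<^sub>F y in at_right 0. \<bar>h2 y / y\<bar> \<le> M"
    and h2d: "\<forall>y>0. (h2 has_real_derivative h2' y) (at y)"
  shows "lie_bracket (Xfield E d b h1 i k) (Xfield E d b h2 i k) p =
    ((h2' (psi_i E d i p) * h1 (psi_i E d i p) - h1' (psi_i E d i p) * h2 (psi_i E d i p))
       * Dpi E d i p (Bfield b i k)) *\<^sub>R Bfield b i k"
proof -
  have lin: "linear (Dpi E d i p)"
    using has_derivative_bounded_linear[OF psi_i_deriv] bounded_linear.linear by blast
  note f1 = frechet_derivative_at[OF X_deriv[OF h1z h1b h1d, of E d b i k p]]
  note f2 = frechet_derivative_at[OF X_deriv[OF h2z h2b h2d, of E d b i k p]]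
  show ?thesis
    unfolding lie_bracket_def f1[symmetric] f2[symmetric]
    by (simp add: Xfield_def linear_scale[OF lin] algebra_simps flip: scaleR_left_diff_distrib)
qed

lemma grad_psi: "\<forall>v. Dps E d p v = grad (psi E d) p \<bullet> v"
proof -
  have lin: "linear (Dps E d p)"
    using has_derivative_bounded_linear[OF psi_deriv] bounded_linear.linear by blast
  obtain g0 where g0: "\<forall>v. Dps E d p v = g0 \<bullet> v" using riesz[OF lin] by blast
  then have "Dps E d p = (\<lambda>v. g0 \<bullet> v)" by auto
  then have "(psi E d has_derivative (\<lambda>v. g0 \<bullet> v)) (at p)" using psi_deriv[of E d p] by simp
  then have "\<exists>g. (psi E d has_derivative (\<lambda>v. g \<bullet> v)) (at p)" by blast
  then have "(psi E d has_derivative (\<lambda>v. grad (psi E d) p \<bullet> v)) (at p)"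
    unfolding grad_def by (rule someI_ex)
  from has_derivative_unique[OF psi_deriv this] show ?thesis by metis
qed

lemma inner_B: "(G::real^'n^'v) \<bullet> Bfield b i k = G $ i \<bullet> b i k"
proof -
  have "G \<bullet> Bfield b i k = (\<Sum>x\<in>UNIV. G$x \<bullet> Bfield b i k $ x)" by (rule inner_vec_def)
  also have "\<dots> = (\<Sum>x\<in>UNIV. if x = i then G$i \<bullet> b i k else 0)"
    by (rule sum.cong) (auto simp: Bfield_def)
  also have "\<dots> = G$i \<bullet> b i k" by simp
  finally show ?thesis .
qed

lemma lie_formula:
  fixes E :: "'v::finite set set" and b :: "'v \<Rightarrow> 'n::finite \<Rightarrow> real^'n"
  assumes card: "\<forall>e\<in>E. card e = 2"
    and bo: "\<forall>i k l. b i k \<bullet> b i l = (if k = l then 1 else 0)"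
    and h1z: "\<forall>y\<le>0. h1 y = 0" and h1b: "\<exists>M. \<forall>\<^sub>F y in at_right 0. \<bar>h1 y / y\<bar> \<le> M"
    and h1d: "\<forall>y>0. (h1 has_real_derivative h1' y) (at y)"
    and h2z: "\<forall>y\<le>0. h2 y = 0" and h2b: "\<exists>M. \<forall>\<^sub>F y in at_right 0. \<bar>h2 y / y\<bar> \<le> M"
    and h2d: "\<forall>y>0. (h2 has_real_derivative h2' y) (at y)"
  shows "lie_deriv (Yfield E d b h1 h2) (psi E d) p =
    1/2 * (\<Sum>i\<in>UNIV. (h2' (psi_i E d i p) * h1 (psi_i E d i p) - h1' (psi_i E d i p) * h2 (psi_i E d i p))
       * norm (grad (psi E d) p $ i) ^ 2)"
proof -
  define G where "G = grad (psi E d) p"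
  define gf where "gf i = h2' (psi_i E d i p) * h1 (psi_i E d i p) - h1' (psi_i E d i p) * h2 (psi_i E d i p)" for i
  have a: "Dpi E d i p (Bfield b i k) = G $ i \<bullet> b i k" for i k
    using Dps_B[OF card, of d p b i k] grad_psi[of E d p] inner_B[of G b i k] by (simp add: G_def)
  have "lie_deriv (Yfield E d b h1 h2) (psi E d) p = G \<bullet> Yfield E d b h1 h2 p"
    unfolding lie_deriv_def frechet_derivative_at[OF psi_deriv, symmetric] using grad_psi[of E d p] by (simp add: G_def)
  also have "Yfield E d b h1 h2 p = (1/2) *\<^sub>R (\<Sum>i\<in>UNIV. \<Sum>k\<in>UNIV. (gf i * (G $ i \<bullet> b i k)) *\<^sub>R Bfield b i k)"
    unfolding Yfield_def bracket[OF h1z h1b h1d h2z h2b h2d] gf_def a by simp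
  also have "G \<bullet> \<dots> = 1/2 * (\<Sum>i\<in>UNIV. gf i * (\<Sum>k\<in>UNIV. (G $ i \<bullet> b i k)^2))"
    by (simp add: inner_sum_right inner_B sum_distrib_left power2_eq_square mult.assoc)
  also have "\<dots> = 1/2 * (\<Sum>i\<in>UNIV. gf i * norm (G $ i) ^ 2)"
    using parseval[of "b i" for i] bo by simp
  finally show ?thesis by (simp add: G_def gf_def)
qed

lemma grad_block:
  fixes E :: "'v::finite set set" and b :: "'v \<Rightarrow> 'n::finite \<Rightarrow> real^'n" and p :: "real^'n^'v"
  assumes card: "\<forall>e\<in>E. card e = 2"
    and bo: "\<forall>i k l. b i k \<bullet> b i l = (if k = l then 1 else 0)"
  shows "norm (grad (psi E d) p $ i) ^ 2 =
     norm (\<Sum>j\<in>{j. {i,j}\<in>E}. (norm (p$j - p$i)^2 - d {i,j}^2) *\<^sub>R (p$i - p$j)) ^ 2"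
proof -
  define G where "G = grad (psi E d) p"
  have bo': "\<forall>k l. b i k \<bullet> b i l = (if k = l then 1 else 0)" using bo by simp
  have a: "G $ i \<bullet> b i k = (\<Sum>j\<in>{j. {i,j}\<in>E}. (norm (p$j - p$i)^2 - d {i,j}^2) *\<^sub>R (p$i - p$j)) \<bullet> b i k" for k
    using Dps_B[OF card, of d p b i k] grad_psi[of E d p] inner_B[of G b i k] Dpi_B[OF card, of d i p b k]
    by (simp add: G_def)
  have "norm (G $ i) ^ 2 = (\<Sum>k\<in>UNIV. (G $ i \<bullet> b i k)^2)" using parseval[OF bo'] by simp
  also have "\<dots> = (\<Sum>k\<in>UNIV. ((\<Sum>j\<in>{j. {i,j}\<in>E}. (norm (p$j - p$i)^2 - d {i,j}^2) *\<^sub>R (p$i - p$j)) \<bullet> b i k)^2)"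
    using a by simp
  also have "\<dots> = norm (\<Sum>j\<in>{j. {i,j}\<in>E}. (norm (p$j - p$i)^2 - d {i,j}^2) *\<^sub>R (p$i - p$j)) ^ 2"
    using parseval[OF bo'] by simp
  finally show ?thesis by (simp add: G_def)
qed

lemma w_bound:
  fixes E :: "'v::finite set set" and p :: "real^'n^'v"
  assumes card: "\<forall>e\<in>E. card e = 2" and small: "psi E d p \<le> 1"
  shows "norm (\<Sum>j\<in>{j. {i,j}\<in>E}. (norm (p$j - p$i)^2 - d {i,j}^2) *\<^sub>R (p$i - p$j)) ^ 2
     \<le> 4 * (2 + (\<Sum>e\<in>E. (d e)^2)) * real (card (UNIV::'v set)) * psi_i E d i p"
proof -
  define S where "S = {j. {i,j}\<in>E}"
  define f where "f j = norm (p$j - p$i)^2 - d {i,j}^2" for j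
  define D2 where "D2 = (\<Sum>e\<in>E. (d e)^2)"
  define N where "N = real (card (UNIV::'v set))"
  have finS: "finite S" by simp
  have D2: "D2 \<ge> 0" by (simp add: D2_def sum_nonneg)
  have pi: "psi_i E d i p = 1/4 * (\<Sum>j\<in>S. (f j)^2)" by (simp add: psi_i_def S_def f_def)
  have pile: "psi_i E d i p \<le> 1" using psi_i_le_psi[OF card, of d i p] small by simp
  have fsq: "(f j)^2 \<le> 4 * psi_i E d i p" if "j \<in> S" for j
    using member_le_sum[of j S "\<lambda>j. (f j)^2", OF that] pi by simp
  have fle: "f j \<le> 2" if "j \<in> S" for j
  proof -
    have "\<bar>f j\<bar>^2 \<le> 2^2" using fsq[OF that] pile by simp
    then have "\<bar>f j\<bar> \<le> 2" by (rule power2_le_imp_le) simp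
    then show ?thesis by simp
  qed
  have dle: "(d {i,j})^2 \<le> D2" if "j \<in> S" for j
    using member_le_sum[of "{i,j}" E "\<lambda>e. (d e)^2"] that by (simp add: S_def D2_def)
  have nle: "norm (p$i - p$j)^2 \<le> 2 + D2" if "j \<in> S" for j
  proof -
    have "norm (p$i - p$j)^2 = f j + d {i,j}^2" by (simp add: f_def norm_minus_commute)
    then show ?thesis using fle[OF that] dle[OF that] by simp
  qed
  have "norm (\<Sum>j\<in>S. f j *\<^sub>R (p$i - p$j)) \<le> (\<Sum>j\<in>S. norm (f j *\<^sub>R (p$i - p$j)))"
    by (rule norm_sum)
  also have "\<dots> = (\<Sum>j\<in>S. \<bar>f j\<bar> * norm (p$i - p$j))" by simp
  finally have n1: "norm (\<Sum>j\<in>S. f j *\<^sub>R (p$i - p$j)) \<le> (\<Sum>j\<in>S. \<bar>f j\<bar> * norm (p$i - p$j))" .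
  have "norm (\<Sum>j\<in>S. f j *\<^sub>R (p$i - p$j)) ^ 2 \<le> (\<Sum>j\<in>S. \<bar>f j\<bar> * norm (p$i - p$j)) ^ 2"
    by (rule power_mono[OF n1 norm_ge_zero])
  also have "\<dots> \<le> (\<Sum>j\<in>S. (\<bar>f j\<bar> * norm (p$i - p$j))^2) * real (card S)"
    by (rule sum_squared_le_sum_of_squares)
  also have "\<dots> \<le> (\<Sum>j\<in>S. (f j)^2 * (2 + D2)) * N"
  proof (rule mult_mono)
    show "(\<Sum>j\<in>S. (\<bar>f j\<bar> * norm (p$i - p$j))^2) \<le> (\<Sum>j\<in>S. (f j)^2 * (2 + D2))"
    proof (rule sum_mono)
      fix j assume j: "j \<in> S"
      have "(\<bar>f j\<bar> * norm (p$i - p$j))^2 = (f j)^2 * norm (p$i - p$j)^2"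
        by (simp add: power_mult_distrib)
      also have "\<dots> \<le> (f j)^2 * (2 + D2)" by (rule mult_left_mono[OF nle[OF j]]) simp
      finally show "(\<bar>f j\<bar> * norm (p$i - p$j))^2 \<le> (f j)^2 * (2 + D2)" .
    qed
    show "real (card S) \<le> N" unfolding N_def by (simp add: card_mono)
    show "0 \<le> (\<Sum>j\<in>S. (f j)^2 * (2 + D2))" using D2 by (intro sum_nonneg) simp
  qed simp
  also have "\<dots> = (\<Sum>j\<in>S. (f j)^2) * (2 + D2) * N"
    by (simp add: sum_distrib_right)
  also have "\<dots> = 4 * (2 + D2) * N * psi_i E d i p"
    by (simp add: pi)
  finally show ?thesis by (simp add: S_def f_def D2_def N_def)
qed

theorem lemma5p3:
  fixes E :: "'v::finite set set"
    and d :: "'v set \<Rightarrow> real"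
    and b :: "'v \<Rightarrow> 'n::finite \<Rightarrow> real^'n"
    and h1 h2 h1' h2' h1'' h2'' :: "real \<Rightarrow> real"
  assumes E_nonempty: "E \<noteq> {}"
    and E_edges: "\<forall>e\<in>E. card e = 2"
    and d_nonneg: "\<forall>e\<in>E. d e \<ge> 0"
    and b_orthonormal: "\<forall>i k l. b i k \<bullet> b i l = (if k = l then 1 else 0)"
    and h1_zero: "\<forall>y\<le>0. h1 y = 0"
    and h2_zero: "\<forall>y\<le>0. h2 y = 0"
    and h1_bounded: "\<exists>M. \<forall>y>0. \<bar>h1 y\<bar> \<le> M"
    and h2_bounded: "\<exists>M. \<forall>y>0. \<bar>h2 y\<bar> \<le> M"
    and h1_deriv: "\<forall>y>0. (h1 has_real_derivative h1' y) (at y)"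
    and h2_deriv: "\<forall>y>0. (h2 has_real_derivative h2' y) (at y)"
    and h1_deriv2: "\<forall>y>0. (h1' has_real_derivative h1'' y) (at y)"
    and h2_deriv2: "\<forall>y>0. (h2' has_real_derivative h2'' y) (at y)"
    and h1_C2: "continuous_on {0<..} h1''"
    and h2_C2: "continuous_on {0<..} h2''"
    and h1_iii: "\<exists>M. \<forall>\<^sub>F y in at_right 0. \<bar>h1 y / y\<bar> \<le> M"
    and h2_iii: "\<exists>M. \<forall>\<^sub>F y in at_right 0. \<bar>h2 y / y\<bar> \<le> M"
    and h1_iv: "\<exists>M. \<forall>\<^sub>F y in at_right 0. \<bar>h1' y\<bar> \<le> M"
    and h2_iv: "\<exists>M. \<forall>\<^sub>F y in at_right 0. \<bar>h2' y\<bar> \<le> M"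
    and h1_v: "\<exists>M. \<forall>\<^sub>F y in at_right 0. \<bar>h1'' y * y\<bar> \<le> M"
    and h2_v: "\<exists>M. \<forall>\<^sub>F y in at_right 0. \<bar>h2'' y * y\<bar> \<le> M"
    and h_vi: "\<exists>r' c'. r' > 0 \<and> c' > 0 \<and>
                 (\<forall>y. 0 < y \<and> y \<le> r' \<longrightarrow> h2' y * h1 y - h1' y * h2 y \<le> - c' * y)"
  shows "\<exists>c r. c > 0 \<and> r > 0 \<and>
           (\<forall>p::real^'n^'v. psi E d p \<le> r \<longrightarrow>
              lie_deriv (Yfield E d b h1 h2) (psi E d) p
                \<le> - c * norm (grad (psi E d) p) ^ 4)"
proof -
  obtain r' c' where r': "r' > 0" and c': "c' > 0"
    and hv: "\<forall>y. 0 < y \<and> y \<le> r' \<longrightarrow> h2' y * h1 y - h1' y * h2 y \<le> - c' * y"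
    using h_vi by blast
  define D2 where "D2 = (\<Sum>e\<in>E. (d e)^2)"
  define N where "N = real (card (UNIV::'v set))"
  define C1 where "C1 = 4 * (2 + D2) * N"
  have D2: "D2 \<ge> 0" by (simp add: D2_def sum_nonneg)
  have N1: "N \<ge> 1" unfolding N_def
    using card_gt_0_iff[of "UNIV::'v set"] by simp
  have C1pos: "C1 > 0" unfolding C1_def using D2 N1 by simp
  define c where "c = c' / (2 * C1 * N)"
  show ?thesis
  proof (intro exI conjI allI impI)
    show "c > 0" unfolding c_def using c' C1pos N1 by simp
    show "min r' 1 > (0::real)" using r' by simp
    fix p :: "real^'n^'v"
    assume small: "psi E d p \<le> min r' 1"
    define nG where "nG i = norm (grad (psi E d) p $ i) ^ 2" for i
    define gf where "gf i = h2' (psi_i E d i p) * h1 (psi_i E d i p) - h1' (psi_i E d i p) * h2 (psi_i E d i p)" for i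
    have lf: "lie_deriv (Yfield E d b h1 h2) (psi E d) p = 1/2 * (\<Sum>i\<in>UNIV. gf i * nG i)"
      using lie_formula[OF E_edges b_orthonormal h1_zero h1_iii h1_deriv h2_zero h2_iii h2_deriv, of d p]
      by (simp add: gf_def nG_def)
    have nG0: "nG i \<ge> 0" for i by (simp add: nG_def)
    have nGle: "nG i \<le> C1 * psi_i E d i p" for i
      using grad_block[OF E_edges b_orthonormal, of d p i] w_bound[OF E_edges, of d p i] small
      by (simp add: nG_def C1_def D2_def N_def)
    have tm: "gf i * nG i \<le> - (c' / C1) * (nG i)^2" for i
    proof (cases "psi_i E d i p = 0")
      case True
      then have "nG i = 0" using nGle[of i] nG0[of i] by simp
      then show ?thesis by simp
    next
      case False
      then have pos: "psi_i E d i p > 0" using psi_i_nonneg[of E d i p] by simp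
      have "psi_i E d i p \<le> r'" using psi_i_le_psi[OF E_edges, of d i p] small by simp
      then have g: "gf i \<le> - c' * psi_i E d i p" using hv pos by (simp add: gf_def)
      have "gf i * nG i \<le> (- c' * psi_i E d i p) * nG i" by (rule mult_right_mono[OF g nG0])
      moreover have "nG i / C1 \<le> psi_i E d i p" using nGle[of i] C1pos by (simp add: pos_divide_le_eq mult.commute)
      then have "nG i / C1 * nG i \<le> psi_i E d i p * nG i" by (rule mult_right_mono[OF _ nG0])
      then have "c' * (nG i / C1 * nG i) \<le> c' * (psi_i E d i p * nG i)"
        by (rule mult_left_mono) (use c' in simp)
      ultimately show ?thesis by (simp add: power2_eq_square algebra_simps)
    qed
    have "norm (grad (psi E d) p) ^ 2 = (\<Sum>i\<in>UNIV. nG i)"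
      by (simp add: norm_vec_def L2_set_def nG_def sum_nonneg)
    then have n4: "norm (grad (psi E d) p) ^ 4 = (\<Sum>i\<in>UNIV. nG i) ^ 2"
      by (metis power_mult numeral_times_numeral mult_2_right numeral_Bit0 semiring_norm(2))
    have cs: "(\<Sum>i\<in>UNIV. nG i) ^ 2 \<le> (\<Sum>i\<in>UNIV. (nG i)^2) * N"
      unfolding N_def by (rule sum_squared_le_sum_of_squares)
    have "lie_deriv (Yfield E d b h1 h2) (psi E d) p \<le> 1/2 * (\<Sum>i\<in>UNIV. - (c' / C1) * (nG i)^2)"
      unfolding lf by (intro mult_left_mono sum_mono tm) simp
    also have "\<dots> = - (c' / (2 * C1)) * (\<Sum>i\<in>UNIV. (nG i)^2)"
      by (simp add: sum_distrib_left sum_negf)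
    also have "\<dots> \<le> - (c' / (2 * C1)) * ((\<Sum>i\<in>UNIV. nG i) ^ 2 / N)"
    proof -
      have "(\<Sum>i\<in>UNIV. nG i) ^ 2 / N \<le> (\<Sum>i\<in>UNIV. (nG i)^2)"
        using cs N1 by (simp add: divide_le_eq)
      moreover have "c' / (2 * C1) \<ge> 0" using c' C1pos by simp
      ultimately have "c' / (2 * C1) * ((\<Sum>i\<in>UNIV. nG i) ^ 2 / N) \<le> c' / (2 * C1) * (\<Sum>i\<in>UNIV. (nG i)^2)"
        by (rule mult_left_mono)
      then show ?thesis by linarith
    qed
    also have "\<dots> = - c * norm (grad (psi E d) p) ^ 4"
      unfolding n4 c_def by (simp add: field_simps)
    finally show "lie_deriv (Yfield E d b h1 h2) (psi E d) p \<le> - c * norm (grad (psi E d) p) ^ 4" .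
  qed
qed

end
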